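(* Let $(G,\cdot)$ be a finite group and $\psi\in\operatorname{End}(G,\cdot)$ with $\psi([[G,\psi],G])\le Z(G,\cdot)$. Let $\nu(g)\in\operatorname{Perm}(G)$ be $h\mapsto g\,\psi(g)^{-1}h\,\psi(g)$ and $N=\{\nu(g):g\in G\}$. Let $G_0=\ker\psi$ and $G_1=\{g\in G:\psi(g)=g\}$, and $N_0=\nu(G_0)$, $N_1=\nu(G_1)$. Then: (1) $N_0=\lambda(G_0)$, it is a normal subgroup of $N$ isomorphic to $(G_0,\cdot)$, and it is normalised by $\lambda(G)$; (2) $N_1=\rho(G_1)$, it is a subgroup of $N$ isomorphic to $(G_1,\cdot)$, and $\lambda(G)$ centralises it; (3) $N_{01}=N_0N_1=\nu(G_0\cdot G_1)$ is a subgroup of $N$, it is the internal direct product of $N_0$ and $N_1$ (so isomorphic to $(G_0,\cdot)\times(G_1,\cdot)$), and it is normalised by $\lambda(G)$; (4) $\lambda(G)\cap N=\{\lambda(g):\psi(g)\in Z(G,\cdot)\}$ and $\rho(G)\cap N=\{\rho(g):g\,\psi(g)^{-1}\in Z(G,\cdot)\}$, and both are subgroups of $N$ normalised by $\lambda(G)$, with $\lambda(G)$ centralising $\rho(G)\cap N$.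
   Context: $\operatorname{Perm}(G)$ is the group of permutations of the set $G$; $\lambda(g)(h)=g\cdot h$ and $\rho(g)(h)=h\cdot g^{-1}$ are the left and right regular representations. For $\psi\in\operatorname{End}(G,\cdot)$, $[g,\psi]=g\cdot\psi(g)^{-1}$ and $[G,\psi]$ is the subgroup generated by these elements; $[x,y]=xyx^{-1}y^{-1}$ and $[A,B]$ is the subgroup generated by $[a,b]$, $a\in A,b\in B$; $Z(G,\cdot)$ is the centre. Under the hypothesis, $N$ is a regular subgroup of $\operatorname{Perm}(G)$ normalised by $\lambda(G)$. *)

theory Defs
  imports "HOL-Algebra.Algebra"
begin

abbreviation Perm :: "('a, 'b) monoid_scheme \<Rightarrow> ('a \<Rightarrow> 'a) monoid" where
  "Perm G \<equiv> BijGroup (carrier G)"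

definition lreg :: "('a, 'b) monoid_scheme \<Rightarrow> 'a \<Rightarrow> ('a \<Rightarrow> 'a)" where
  "lreg G g = (\<lambda>h \<in> carrier G. g \<otimes>\<^bsub>G\<^esub> h)"

definition rreg :: "('a, 'b) monoid_scheme \<Rightarrow> 'a \<Rightarrow> ('a \<Rightarrow> 'a)" where
  "rreg G g = (\<lambda>h \<in> carrier G. h \<otimes>\<^bsub>G\<^esub> inv\<^bsub>G\<^esub> g)"

definition nu :: "('a, 'b) monoid_scheme \<Rightarrow> ('a \<Rightarrow> 'a) \<Rightarrow> 'a \<Rightarrow> ('a \<Rightarrow> 'a)" where
  "nu G f g = (\<lambda>h \<in> carrier G. g \<otimes>\<^bsub>G\<^esub> inv\<^bsub>G\<^esub> (f g) \<otimes>\<^bsub>G\<^esub> h \<otimes>\<^bsub>G\<^esub> f g)"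

definition group_center :: "('a, 'b) monoid_scheme \<Rightarrow> 'a set" where
  "group_center G = {z \<in> carrier G. \<forall>g \<in> carrier G. z \<otimes>\<^bsub>G\<^esub> g = g \<otimes>\<^bsub>G\<^esub> z}"

definition grp_comm :: "('a, 'b) monoid_scheme \<Rightarrow> 'a \<Rightarrow> 'a \<Rightarrow> 'a" where
  "grp_comm G x y = x \<otimes>\<^bsub>G\<^esub> y \<otimes>\<^bsub>G\<^esub> inv\<^bsub>G\<^esub> x \<otimes>\<^bsub>G\<^esub> inv\<^bsub>G\<^esub> y"

definition comm_subgroup :: "('a, 'b) monoid_scheme \<Rightarrow> 'a set \<Rightarrow> 'a set \<Rightarrow> 'a set" where
  "comm_subgroup G A B = generate G {grp_comm G a b | a b. a \<in> A \<and> b \<in> B}"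

definition psi_comm_subgroup :: "('a, 'b) monoid_scheme \<Rightarrow> ('a \<Rightarrow> 'a) \<Rightarrow> 'a set" where
  "psi_comm_subgroup G f = generate G {g \<otimes>\<^bsub>G\<^esub> inv\<^bsub>G\<^esub> (f g) | g. g \<in> carrier G}"

definition normalises :: "('c, 'd) monoid_scheme \<Rightarrow> 'c set \<Rightarrow> 'c set \<Rightarrow> bool" where
  "normalises P S T \<longleftrightarrow>
     (\<forall>x \<in> S. (\<lambda>y. x \<otimes>\<^bsub>P\<^esub> y \<otimes>\<^bsub>P\<^esub> inv\<^bsub>P\<^esub> x) ` T = T)"

definition centralises :: "('c, 'd) monoid_scheme \<Rightarrow> 'c set \<Rightarrow> 'c set \<Rightarrow> bool" where
  "centralises P S T \<longleftrightarrow> (\<forall>x \<in> S. \<forall>y \<in> T. x \<otimes>\<^bsub>P\<^esub> y = y \<otimes>\<^bsub>P\<^esub> x)"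

definition internal_direct_product :: "('c, 'd) monoid_scheme \<Rightarrow> 'c set \<Rightarrow> 'c set \<Rightarrow> 'c set \<Rightarrow> bool" where
  "internal_direct_product P H A B \<longleftrightarrow>
     subgroup H P \<and> A \<lhd> P\<lparr>carrier := H\<rparr> \<and> B \<lhd> P\<lparr>carrier := H\<rparr> \<and>
     A \<inter> B = {\<one>\<^bsub>P\<^esub>} \<and> A <#>\<^bsub>P\<^esub> B = H"

end

theory Submission
  imports Defs
begin


definition tm :: "('a,'b) monoid_scheme \<Rightarrow> 'a \<Rightarrow> 'a \<Rightarrow> ('a \<Rightarrow> 'a)" where
  "tm G c d = (\<lambda>h\<in>carrier G. c \<otimes>\<^bsub>G\<^esub> h \<otimes>\<^bsub>G\<^esub> d)"

context group begin

lemma canc1 [simp]: "x \<in> carrier G \<Longrightarrow> y \<in> carrier G \<Longrightarrow> x \<otimes> (inv x \<otimes> y) = y"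
  by (simp add: m_assoc [symmetric])
lemma canc2 [simp]: "x \<in> carrier G \<Longrightarrow> y \<in> carrier G \<Longrightarrow> inv x \<otimes> (x \<otimes> y) = y"
  by (simp add: m_assoc [symmetric])

lemma tm_Bij: assumes "c \<in> carrier G" "d \<in> carrier G" shows "tm G c d \<in> Bij (carrier G)"
proof -
  have "bij_betw (tm G c d) (carrier G) (carrier G)"
    by (rule bij_betw_byWitness[where f'="\<lambda>h. inv c \<otimes> h \<otimes> inv d"]) (auto simp: tm_def assms m_assoc)
  then show ?thesis by (simp add: Bij_def tm_def)
qed

lemma tm_carrier: "c \<in> carrier G \<Longrightarrow> d \<in> carrier G \<Longrightarrow> tm G c d \<in> carrier (BijGroup (carrier G))"
  using tm_Bij by (simp add: BijGroup_def)

lemma tm_mult: assumes "c \<in> carrier G" "d \<in> carrier G" "c' \<in> carrier G" "d' \<in> carrier G"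
  shows "tm G c d \<otimes>\<^bsub>BijGroup (carrier G)\<^esub> tm G c' d' = tm G (c \<otimes> c') (d' \<otimes> d)"
  using tm_Bij[OF assms(1,2)] tm_Bij[OF assms(3,4)] assms
  by (auto simp: BijGroup_def compose_def tm_def m_assoc intro!: restrict_ext)

lemma tm_one: "tm G \<one> \<one> = \<one>\<^bsub>BijGroup (carrier G)\<^esub>"
  by (auto simp: BijGroup_def tm_def intro!: restrict_ext)

lemma tm_inv: assumes "c \<in> carrier G" "d \<in> carrier G"
  shows "inv\<^bsub>BijGroup (carrier G)\<^esub> (tm G c d) = tm G (inv c) (inv d)"
  apply (rule group.inv_equality[OF group_BijGroup])
  using assms by (simp_all add: tm_mult tm_one tm_carrier)

lemma tm_conj: assumes "a \<in> carrier G" "d \<in> carrier G" "a' \<in> carrier G" "d' \<in> carrier G"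
  shows "tm G a d \<otimes>\<^bsub>BijGroup (carrier G)\<^esub> tm G a' d' \<otimes>\<^bsub>BijGroup (carrier G)\<^esub>
     inv\<^bsub>BijGroup (carrier G)\<^esub> (tm G a d) = tm G (a \<otimes> a' \<otimes> inv a) (inv d \<otimes> d' \<otimes> d)"
  using assms by (simp add: tm_mult tm_inv m_assoc)

lemma center_comm: "z \<in> group_center G \<Longrightarrow> g \<in> carrier G \<Longrightarrow> z \<otimes> g = g \<otimes> z"
  by (simp add: group_center_def)
lemma center_carrier: "z \<in> group_center G \<Longrightarrow> z \<in> carrier G"
  by (simp add: group_center_def)
lemma center_one: "\<one> \<in> group_center G"
  by (simp add: group_center_def)
lemma center_mult: assumes "z \<in> group_center G" "w \<in> group_center G" shows "z \<otimes> w \<in> group_center G"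
proof -
  have c: "z \<in> carrier G" "w \<in> carrier G" using assms by (simp_all add: center_carrier)
  { fix g assume g: "g \<in> carrier G"
    have "z \<otimes> w \<otimes> g = z \<otimes> (g \<otimes> w)" using c g center_comm[OF assms(2) g] by (simp add: m_assoc)
    also have "\<dots> = g \<otimes> (z \<otimes> w)" using c g center_comm[OF assms(1) g] by (simp add: m_assoc[symmetric])
    finally have "z \<otimes> w \<otimes> g = g \<otimes> (z \<otimes> w)" . }
  then show ?thesis using c by (simp add: group_center_def)
qed
lemma center_inv: assumes "z \<in> group_center G" shows "inv z \<in> group_center G"
proof -
  have c: "z \<in> carrier G" using assms by (simp add: center_carrier)
  { fix g assume g: "g \<in> carrier G"
    have "inv z \<otimes> g = inv z \<otimes> (g \<otimes> z) \<otimes> inv z" using c g by (simp add: m_assoc)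
    also have "\<dots> = g \<otimes> inv z" using c g center_comm[OF assms g, symmetric] by (simp add: m_assoc)
    finally have "inv z \<otimes> g = g \<otimes> inv z" . }
  then show ?thesis using c by (simp add: group_center_def)
qed
lemma center_conj: "z \<in> group_center G \<Longrightarrow> x \<in> carrier G \<Longrightarrow> x \<otimes> z \<otimes> inv x = z"
  using center_comm[of z "inv x"] center_carrier[of z] by (simp add: m_assoc)

lemma tm_eqD: assumes c: "c \<in> carrier G" "d \<in> carrier G" "c' \<in> carrier G" "d' \<in> carrier G"
  and eq: "tm G c d = tm G c' d'"
  shows "c \<otimes> d = c' \<otimes> d'" "inv c' \<otimes> c \<in> group_center G"
proof -
  have e: "c \<otimes> g \<otimes> d = c' \<otimes> g \<otimes> d'" if "g \<in> carrier G" for g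
    using fun_cong[OF eq, of g] that by (simp add: tm_def)
  from e[of \<one>] c show e1: "c \<otimes> d = c' \<otimes> d'" by simp
  have d': "d' = inv c' \<otimes> c \<otimes> d"
  proof -
    have "d' = inv c' \<otimes> (c' \<otimes> d')" using c by simp
    also have "\<dots> = inv c' \<otimes> c \<otimes> d" using c e1 by (simp add: m_assoc)
    finally show ?thesis .
  qed
  { fix g assume g: "g \<in> carrier G"
    have "inv c' \<otimes> c \<otimes> g \<otimes> d = inv c' \<otimes> (c \<otimes> g \<otimes> d)" using c g by (simp add: m_assoc)
    also have "\<dots> = g \<otimes> d'" using e[OF g] c g by (simp add: m_assoc)
    also have "\<dots> = g \<otimes> (inv c' \<otimes> c) \<otimes> d" using d' c g by (simp add: m_assoc)
    finally have "inv c' \<otimes> c \<otimes> g = g \<otimes> (inv c' \<otimes> c)" using c g by simp }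
  then show "inv c' \<otimes> c \<in> group_center G" using c by (simp add: group_center_def)
qed

lemma tm_eqI: assumes c: "c' \<in> carrier G" "d \<in> carrier G" and z: "z \<in> group_center G"
  shows "tm G (c' \<otimes> z) d = tm G c' (z \<otimes> d)"
  using c center_carrier[OF z] center_comm[OF z]
  by (auto simp: tm_def m_assoc intro!: restrict_ext)

lemma lreg_tm: "g \<in> carrier G \<Longrightarrow> lreg G g = tm G g \<one>" by (auto simp: lreg_def tm_def intro!: restrict_ext)
lemma rreg_tm: "rreg G g = tm G \<one> (inv g)" by (auto simp: rreg_def tm_def intro!: restrict_ext)
lemma nu_tm: "f g \<in> carrier G \<Longrightarrow> g \<in> carrier G \<Longrightarrow> nu G f g = tm G (g \<otimes> inv (f g)) (f g)"
  by (auto simp: nu_def tm_def m_assoc intro!: restrict_ext)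

abbreviation "TS R \<equiv> (\<lambda>(a,d). tm G a d) ` R"

lemma TS_memE: assumes "x \<in> TS R" obtains a d where "(a,d) \<in> R" "x = tm G a d"
  using assms by auto
lemma TS_memI: "(a,d) \<in> R \<Longrightarrow> tm G a d \<in> TS R"
  by force
lemma TS_prod_memE: assumes "x \<in> TS (A \<times> B)" obtains a d where "a \<in> A" "d \<in> B" "x = tm G a d"
  using assms by auto

lemma tm_set_subgroup:
  assumes R: "R \<subseteq> carrier G \<times> carrier G" "(\<one>,\<one>) \<in> R"
    and mc: "\<And>a d a' d'. (a,d) \<in> R \<Longrightarrow> (a',d') \<in> R \<Longrightarrow> (a \<otimes> a', d' \<otimes> d) \<in> R"
    and ic: "\<And>a d. (a,d) \<in> R \<Longrightarrow> (inv a, inv d) \<in> R"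
  shows "subgroup (TS R) (BijGroup (carrier G))"
proof (rule group.subgroupI[OF group_BijGroup])
  show "TS R \<subseteq> carrier (BijGroup (carrier G))" using R(1) tm_carrier by auto
  show "TS R \<noteq> {}" using R(2) by auto
  show "inv\<^bsub>BijGroup (carrier G)\<^esub> x \<in> TS R" if xT: "x \<in> TS R" for x
  proof -
    obtain p where hp: "p \<in> R" "x = (\<lambda>(a,d). tm G a d) p" using xT by blast
    obtain a d where ad: "(a,d) \<in> R" "x = tm G a d" using hp by (cases p) auto
    then have "a \<in> carrier G" "d \<in> carrier G" using R(1) by auto
    then have "inv\<^bsub>BijGroup (carrier G)\<^esub> x = tm G (inv a) (inv d)" using ad by (simp add: tm_inv)
    then show ?thesis using ic[OF ad(1)] by force
  qed
  show "x \<otimes>\<^bsub>BijGroup (carrier G)\<^esub> y \<in> TS R" if xT: "x \<in> TS R" and yT: "y \<in> TS R" for x y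
  proof -
    obtain p where hp: "p \<in> R" "x = (\<lambda>(a,d). tm G a d) p" using xT by blast
    obtain a d where ad: "(a,d) \<in> R" "x = tm G a d" using hp by (cases p) auto
    obtain q where hq: "q \<in> R" "y = (\<lambda>(a,d). tm G a d) q" using yT by blast
    obtain a' d' where ad': "(a',d') \<in> R" "y = tm G a' d'" using hq by (cases q) auto
    have "a \<in> carrier G" "d \<in> carrier G" "a' \<in> carrier G" "d' \<in> carrier G" using R(1) ad ad' by auto
    then have "x \<otimes>\<^bsub>BijGroup (carrier G)\<^esub> y = tm G (a \<otimes> a') (d' \<otimes> d)" using ad ad' by (simp add: tm_mult)
    then show ?thesis using mc[OF ad(1) ad'(1)] by force
  qed
qed

lemma tm_set_normalises:
  assumes R: "R \<subseteq> carrier G \<times> carrier G"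
    and cc: "\<And>x a d. x \<in> carrier G \<Longrightarrow> (a,d) \<in> R \<Longrightarrow> (x \<otimes> a \<otimes> inv x, d) \<in> R"
  shows "normalises (BijGroup (carrier G)) (lreg G ` carrier G) (TS R)"
  unfolding normalises_def
proof
  fix y assume "y \<in> lreg G ` carrier G"
  then obtain x where x: "x \<in> carrier G" "y = tm G x \<one>" by (auto simp: lreg_tm)
  have conj: "y \<otimes>\<^bsub>BijGroup (carrier G)\<^esub> tm G a d \<otimes>\<^bsub>BijGroup (carrier G)\<^esub> inv\<^bsub>BijGroup (carrier G)\<^esub> y
     = tm G (x \<otimes> a \<otimes> inv x) d" if "a \<in> carrier G" "d \<in> carrier G" for a d
    using tm_conj[OF x(1) one_closed that] x that by simp
  show "(\<lambda>z. y \<otimes>\<^bsub>BijGroup (carrier G)\<^esub> z \<otimes>\<^bsub>BijGroup (carrier G)\<^esub> inv\<^bsub>BijGroup (carrier G)\<^esub> y) ` TS R = TS R"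
  proof
    show "(\<lambda>z. y \<otimes>\<^bsub>BijGroup (carrier G)\<^esub> z \<otimes>\<^bsub>BijGroup (carrier G)\<^esub> inv\<^bsub>BijGroup (carrier G)\<^esub> y) ` TS R \<subseteq> TS R"
      using R cc x conj by fastforce
    show "TS R \<subseteq> (\<lambda>z. y \<otimes>\<^bsub>BijGroup (carrier G)\<^esub> z \<otimes>\<^bsub>BijGroup (carrier G)\<^esub> inv\<^bsub>BijGroup (carrier G)\<^esub> y) ` TS R"
    proof
      fix t assume "t \<in> TS R"
      then obtain a d where ad: "(a,d) \<in> R" "t = tm G a d" by auto
      have ac: "a \<in> carrier G" "d \<in> carrier G" using ad R by auto
      have r: "(inv x \<otimes> a \<otimes> x, d) \<in> R" using cc[of "inv x" a d] ad x by simp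
      have "t = y \<otimes>\<^bsub>BijGroup (carrier G)\<^esub> tm G (inv x \<otimes> a \<otimes> x) d \<otimes>\<^bsub>BijGroup (carrier G)\<^esub> inv\<^bsub>BijGroup (carrier G)\<^esub> y"
        using conj[of "inv x \<otimes> a \<otimes> x" d] ad ac x by (simp add: m_assoc)
      then show "t \<in> (\<lambda>z. y \<otimes>\<^bsub>BijGroup (carrier G)\<^esub> z \<otimes>\<^bsub>BijGroup (carrier G)\<^esub> inv\<^bsub>BijGroup (carrier G)\<^esub> y) ` TS R"
        using r by force
    qed
  qed
qed

lemma tm_set_centralises:
  assumes R: "R \<subseteq> {\<one>} \<times> carrier G"
  shows "centralises (BijGroup (carrier G)) (lreg G ` carrier G) (TS R)"
  using R unfolding centralises_def by (auto simp: lreg_tm tm_mult)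

end



locale nuctx = group G for G (structure) +
  fixes psi :: "'a \<Rightarrow> 'a"
  assumes endo: "psi \<in> hom G G"
    and hyp: "psi ` comm_subgroup G (psi_comm_subgroup G psi) (carrier G) \<subseteq> group_center G"
begin

abbreviation "P \<equiv> BijGroup (carrier G)"

lemma gh: "group_hom G G psi"
  by (simp add: group_hom_def group_hom_axioms_def endo is_group)

lemma psi_closed [simp]: "x \<in> carrier G \<Longrightarrow> psi x \<in> carrier G"
  using endo by (auto simp: hom_def)
lemma psi_mult [simp]: "x \<in> carrier G \<Longrightarrow> y \<in> carrier G \<Longrightarrow> psi (x \<otimes> y) = psi x \<otimes> psi y"
  using endo by (auto simp: hom_def)
lemma psi_one [simp]: "psi \<one> = \<one>"
  using group_hom.hom_one[OF gh] by simp
lemma psi_inv [simp]: "x \<in> carrier G \<Longrightarrow> psi (inv x) = inv (psi x)"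
  using group_hom.hom_inv[OF gh] by simp

lemma hyp_elem: assumes "g \<in> carrier G" "k \<in> carrier G"
  shows "psi (g \<otimes> inv (psi g) \<otimes> k \<otimes> inv (g \<otimes> inv (psi g)) \<otimes> inv k) \<in> group_center G"
proof -
  have "g \<otimes> inv (psi g) \<in> psi_comm_subgroup G psi"
    unfolding psi_comm_subgroup_def using assms by (blast intro: generate.incl)
  then have "grp_comm G (g \<otimes> inv (psi g)) k \<in> comm_subgroup G (psi_comm_subgroup G psi) (carrier G)"
    unfolding comm_subgroup_def using assms by (blast intro: generate.incl)
  then show ?thesis using hyp by (auto simp: grp_comm_def)
qed

lemma nu_mult: assumes g: "g \<in> carrier G" and k: "k \<in> carrier G"
  shows "nu G psi g \<otimes>\<^bsub>P\<^esub> nu G psi k = nu G psi (g \<otimes> inv (psi g) \<otimes> k \<otimes> psi g)"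
proof -
  define m where "m = g \<otimes> inv (psi g) \<otimes> k \<otimes> psi g"
  define z where "z = psi (g \<otimes> inv (psi g) \<otimes> k \<otimes> inv (g \<otimes> inv (psi g)) \<otimes> inv k)"
  define d where "d = psi k \<otimes> psi g"
  have mc: "m \<in> carrier G" using g k by (simp add: m_def)
  have dc: "d \<in> carrier G" using g k by (simp add: d_def)
  have zZ: "z \<in> group_center G" unfolding z_def by (rule hyp_elem[OF g k])
  have zc: "z \<in> carrier G" using zZ center_carrier by blast
  have B: "z \<otimes> d = psi m"
    using g k by (simp add: z_def d_def m_def m_assoc inv_mult_group)
  have z': "z = psi m \<otimes> inv d" using B[symmetric] zc dc mc by (simp add: m_assoc)
  have A: "m \<otimes> inv (psi m) \<otimes> z = g \<otimes> inv (psi g) \<otimes> (k \<otimes> inv (psi k))"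
    using g k mc by (simp add: z' d_def m_assoc inv_mult_group) (simp add: m_def m_assoc)
  have "nu G psi g \<otimes>\<^bsub>P\<^esub> nu G psi k = tm G (g \<otimes> inv (psi g) \<otimes> (k \<otimes> inv (psi k))) d"
    using g k by (simp add: nu_tm tm_mult d_def)
  also have "\<dots> = tm G (m \<otimes> inv (psi m) \<otimes> z) d" by (simp add: A)
  also have "\<dots> = tm G (m \<otimes> inv (psi m)) (z \<otimes> d)" using tm_eqI[OF _ dc zZ] mc by simp
  also have "\<dots> = nu G psi m" using mc by (simp add: B nu_tm)
  finally show ?thesis by (simp add: m_def)
qed

lemma nu_one: "nu G psi \<one> = \<one>\<^bsub>P\<^esub>"
  by (simp add: nu_tm tm_one)

lemma nu_carrier: "g \<in> carrier G \<Longrightarrow> nu G psi g \<in> carrier P"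
  by (simp add: nu_tm tm_carrier)

lemma nu_inv: assumes g: "g \<in> carrier G"
  shows "inv\<^bsub>P\<^esub> (nu G psi g) = nu G psi (psi g \<otimes> inv g \<otimes> inv (psi g))"
proof -
  have kc: "psi g \<otimes> inv g \<otimes> inv (psi g) \<in> carrier G" using g by simp
  have "nu G psi g \<otimes>\<^bsub>P\<^esub> nu G psi (psi g \<otimes> inv g \<otimes> inv (psi g)) = \<one>\<^bsub>P\<^esub>"
    using g by (simp add: nu_mult m_assoc nu_one)
  then have "nu G psi (psi g \<otimes> inv g \<otimes> inv (psi g)) \<otimes>\<^bsub>P\<^esub> nu G psi g = \<one>\<^bsub>P\<^esub>"
    using group.inv_comm[OF group_BijGroup] nu_carrier[OF g] nu_carrier[OF kc] by blast
  then show ?thesis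
    using group.inv_equality[OF group_BijGroup] nu_carrier[OF g] nu_carrier[OF kc] by blast
qed

lemma N_subgroup: "subgroup (nu G psi ` carrier G) P"
proof (rule group.subgroupI[OF group_BijGroup])
  show "nu G psi ` carrier G \<subseteq> carrier P" using nu_carrier by auto
  show "nu G psi ` carrier G \<noteq> {}" by auto
  show "inv\<^bsub>P\<^esub> x \<in> nu G psi ` carrier G" if "x \<in> nu G psi ` carrier G" for x
    using that nu_inv by auto
  show "x \<otimes>\<^bsub>P\<^esub> y \<in> nu G psi ` carrier G" if "x \<in> nu G psi ` carrier G" "y \<in> nu G psi ` carrier G" for x y
    using that nu_mult by auto
qed

end



context nuctx begin

definition "K0 = {g \<in> carrier G. psi g = \<one>}"
definition "K1 = {g \<in> carrier G. psi g = g}"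
definition "L = {g \<in> carrier G. psi g \<in> group_center G}"
definition "S = {g \<in> carrier G. g \<otimes> inv (psi g) \<in> group_center G}"

lemma K0_sub: "K0 \<subseteq> carrier G" and K1_sub: "K1 \<subseteq> carrier G"
  and L_sub: "L \<subseteq> carrier G" and S_sub: "S \<subseteq> carrier G"
  by (auto simp: K0_def K1_def L_def S_def)

lemma K0_subgroup: "subgroup K0 G"
  by (rule subgroupI) (auto simp: K0_def)
lemma K1_subgroup: "subgroup K1 G"
  by (rule subgroupI) (auto simp: K1_def)
lemma K0_conj: "x \<in> carrier G \<Longrightarrow> a \<in> K0 \<Longrightarrow> x \<otimes> a \<otimes> inv x \<in> K0"
  by (auto simp: K0_def)
lemma K01: "a \<in> K0 \<Longrightarrow> a \<in> K1 \<Longrightarrow> a = \<one>"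
  by (auto simp: K0_def K1_def)

lemma L_subgroup: "subgroup L G"
  by (rule subgroupI) (auto simp: L_def center_mult center_inv intro!: exI[of _ \<one>] center_one)
lemma L_conj: "x \<in> carrier G \<Longrightarrow> a \<in> L \<Longrightarrow> x \<otimes> a \<otimes> inv x \<in> L"
  by (auto simp: L_def center_conj)

lemma S_mult: assumes "g \<in> S" "k \<in> S" shows "g \<otimes> k \<in> S"
proof -
  have c: "g \<in> carrier G" "k \<in> carrier G" and zg: "g \<otimes> inv (psi g) \<in> group_center G"
    and zk: "k \<otimes> inv (psi k) \<in> group_center G" using assms by (auto simp: S_def)
  have "g \<otimes> k \<otimes> inv (psi (g \<otimes> k)) = g \<otimes> (k \<otimes> inv (psi k)) \<otimes> inv (psi g)"
    using c by (simp add: m_assoc inv_mult_group)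
  also have "\<dots> = (k \<otimes> inv (psi k)) \<otimes> g \<otimes> inv (psi g)"
    using c center_comm[OF zk c(1)] by simp
  also have "\<dots> = (k \<otimes> inv (psi k)) \<otimes> (g \<otimes> inv (psi g))" using c by (simp add: m_assoc)
  finally show ?thesis using c center_mult[OF zk zg] by (simp add: S_def)
qed

lemma S_inv: assumes "g \<in> S" shows "inv g \<in> S"
proof -
  have c: "g \<in> carrier G" and zg: "g \<otimes> inv (psi g) \<in> group_center G"
    using assms by (auto simp: S_def)
  have zi: "inv (g \<otimes> inv (psi g)) \<in> group_center G" by (rule center_inv[OF zg])
  have "inv g \<otimes> inv (psi (inv g)) = inv g \<otimes> (inv (g \<otimes> inv (psi g)) \<otimes> g)"
    using c by (simp add: inv_mult_group m_assoc)
  also have "\<dots> = inv g \<otimes> (g \<otimes> inv (g \<otimes> inv (psi g)))"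
    using c center_comm[OF zi c] by simp
  also have "\<dots> = inv (g \<otimes> inv (psi g))" using c by (simp add: m_assoc[symmetric])
  finally show ?thesis using c zi by (simp add: S_def)
qed

lemma S_one: "\<one> \<in> S" by (simp add: S_def center_one)

lemma TS_prod1: "TS (A \<times> {b}) = (\<lambda>a. tm G a b) ` A" by force
lemma TS_prod2: "TS ({b} \<times> A) = (\<lambda>a. tm G b a) ` A" by force

lemma N0_eq: "nu G psi ` K0 = lreg G ` K0" and N0_TS: "nu G psi ` K0 = TS (K0 \<times> {\<one>})"
  unfolding TS_prod1 using K0_sub
  by (auto simp: K0_def nu_tm lreg_tm intro!: image_cong)

lemma N1_TS: "nu G psi ` K1 = TS ({\<one>} \<times> K1)"
  unfolding TS_prod2 using K1_sub
  by (auto simp: K1_def nu_tm intro!: image_cong)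

lemma N1_eq: "nu G psi ` K1 = rreg G ` K1"
proof -
  have "rreg G ` K1 = (\<lambda>k. tm G \<one> (inv k)) ` K1" using K1_sub by (auto simp: rreg_tm intro!: image_cong)
  also have "\<dots> = (\<lambda>k. tm G \<one> k) ` K1"
  proof
    show "(\<lambda>k. tm G \<one> (inv k)) ` K1 \<subseteq> (\<lambda>k. tm G \<one> k) ` K1"
      using subgroup.m_inv_closed[OF K1_subgroup] by auto
    show "(\<lambda>k. tm G \<one> k) ` K1 \<subseteq> (\<lambda>k. tm G \<one> (inv k)) ` K1"
    proof
      fix t assume "t \<in> (\<lambda>k. tm G \<one> k) ` K1"
      then obtain k where k: "k \<in> K1" "t = tm G \<one> k" by auto
      then have "t = tm G \<one> (inv (inv k))" using K1_sub by auto
      then show "t \<in> (\<lambda>k. tm G \<one> (inv k)) ` K1" using k subgroup.m_inv_closed[OF K1_subgroup] by blast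
    qed
  qed
  finally show ?thesis using N1_TS TS_prod2 by simp
qed

end



lemma normal_in_sub:
  assumes P: "group P" and H: "subgroup H P" and A: "subgroup A P" "A \<subseteq> H"
    and cj: "\<And>x h. x \<in> H \<Longrightarrow> h \<in> A \<Longrightarrow> x \<otimes>\<^bsub>P\<^esub> h \<otimes>\<^bsub>P\<^esub> inv\<^bsub>P\<^esub> x \<in> A"
  shows "A \<lhd> P\<lparr>carrier := H\<rparr>"
proof -
  have gH: "group (P\<lparr>carrier := H\<rparr>)" by (rule group.subgroup_imp_group[OF P H])
  show ?thesis
    unfolding group.normal_inv_iff[OF gH]
  proof
    show "subgroup A (P\<lparr>carrier := H\<rparr>)" by (rule group.subgroup_incl[OF P A(1) H A(2)])
    show "\<forall>x\<in>carrier (P\<lparr>carrier := H\<rparr>). \<forall>h\<in>A. x \<otimes>\<^bsub>P\<lparr>carrier := H\<rparr>\<^esub> h \<otimes>\<^bsub>P\<lparr>carrier := H\<rparr>\<^esub> inv\<^bsub>P\<lparr>carrier := H\<rparr>\<^esub> x \<in> A"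
      using cj group.m_inv_consistent[OF P H] by simp
  qed
qed

lemma iso_from:
  assumes Q: "group Q" and f: "f \<in> hom Q (P\<lparr>carrier := T\<rparr>)" "inj_on f (carrier Q)" "f ` carrier Q = T"
  shows "P\<lparr>carrier := T\<rparr> \<cong> Q"
proof -
  have "f \<in> iso Q (P\<lparr>carrier := T\<rparr>)" using f by (simp add: iso_def bij_betw_def)
  then have "Q \<cong> P\<lparr>carrier := T\<rparr>" by (rule is_isoI)
  then show ?thesis by (rule group.iso_sym[OF Q])
qed

context group begin
lemma inv_one_eq: "x \<in> carrier G \<Longrightarrow> y \<in> carrier G \<Longrightarrow> inv x \<otimes> y = \<one> \<Longrightarrow> x = y"
  by (metis canc1 r_one)
end

context nuctx begin

lemma nu_ab: assumes "a \<in> K0" "b \<in> K1" shows "nu G psi (a \<otimes> b) = tm G a b"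
proof -
  have c: "a \<in> carrier G" "b \<in> carrier G" using assms K0_sub K1_sub by auto
  have p: "psi (a \<otimes> b) = b" using assms c by (simp add: K0_def K1_def)
  have "nu G psi (a \<otimes> b) = tm G (a \<otimes> b \<otimes> inv b) b" using c p by (simp add: nu_tm)
  also have "a \<otimes> b \<otimes> inv b = a" using c by (simp add: m_assoc)
  finally show ?thesis .
qed

lemma N01_TS: "nu G psi ` K0 <#>\<^bsub>P\<^esub> nu G psi ` K1 = TS (K0 \<times> K1)"
proof
  show "nu G psi ` K0 <#>\<^bsub>P\<^esub> nu G psi ` K1 \<subseteq> TS (K0 \<times> K1)"
  proof
    fix x assume "x \<in> nu G psi ` K0 <#>\<^bsub>P\<^esub> nu G psi ` K1"
    then obtain u v where uv: "u \<in> nu G psi ` K0" "v \<in> nu G psi ` K1" "x = u \<otimes>\<^bsub>P\<^esub> v"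
      unfolding set_mult_def by blast
    obtain a where a: "a \<in> K0" "u = tm G a \<one>" using uv(1) unfolding N0_TS TS_prod1 by blast
    obtain b where b: "b \<in> K1" "v = tm G \<one> b" using uv(2) unfolding N1_TS TS_prod2 by blast
    have c: "a \<in> carrier G" "b \<in> carrier G" using a b K0_sub K1_sub by auto
    have "x = tm G a b" using uv a b c by (simp add: tm_mult)
    then show "x \<in> TS (K0 \<times> K1)" using a b TS_memI[of a b "K0 \<times> K1"] by simp
  qed
  show "TS (K0 \<times> K1) \<subseteq> nu G psi ` K0 <#>\<^bsub>P\<^esub> nu G psi ` K1"
  proof
    fix x assume "x \<in> TS (K0 \<times> K1)"
    then obtain a b where ab: "a \<in> K0" "b \<in> K1" "x = tm G a b" by (rule TS_prod_memE)
    have c: "a \<in> carrier G" "b \<in> carrier G" using ab K0_sub K1_sub by auto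
    have u: "tm G a \<one> \<in> nu G psi ` K0" unfolding N0_TS TS_prod1 using ab by blast
    have v: "tm G \<one> b \<in> nu G psi ` K1" unfolding N1_TS TS_prod2 using ab by blast
    have "x = tm G a \<one> \<otimes>\<^bsub>P\<^esub> tm G \<one> b" using ab c by (simp add: tm_mult)
    then show "x \<in> nu G psi ` K0 <#>\<^bsub>P\<^esub> nu G psi ` K1"
      unfolding set_mult_def using u v by blast
  qed
qed

lemma N01_nu: "nu G psi ` (K0 <#> K1) = TS (K0 \<times> K1)"
proof
  show "nu G psi ` (K0 <#> K1) \<subseteq> TS (K0 \<times> K1)"
  proof
    fix x assume "x \<in> nu G psi ` (K0 <#> K1)"
    then obtain a b where ab: "a \<in> K0" "b \<in> K1" "x = nu G psi (a \<otimes> b)"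
      unfolding set_mult_def by blast
    then show "x \<in> TS (K0 \<times> K1)" using nu_ab TS_memI[of a b "K0 \<times> K1"] by simp
  qed
  show "TS (K0 \<times> K1) \<subseteq> nu G psi ` (K0 <#> K1)"
  proof
    fix x assume "x \<in> TS (K0 \<times> K1)"
    then obtain a b where ab: "a \<in> K0" "b \<in> K1" "x = tm G a b" by (rule TS_prod_memE)
    then have "x = nu G psi (a \<otimes> b)" using nu_ab by simp
    moreover have "a \<otimes> b \<in> K0 <#> K1" unfolding set_mult_def using ab by blast
    ultimately show "x \<in> nu G psi ` (K0 <#> K1)" by blast
  qed
qed

lemma N01_sub: "TS (K0 \<times> K1) \<subseteq> nu G psi ` carrier G"
proof
  fix x assume "x \<in> TS (K0 \<times> K1)"
  then obtain a b where ab: "a \<in> K0" "b \<in> K1" "x = tm G a b" by (rule TS_prod_memE)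
  then have "x = nu G psi (a \<otimes> b)" "a \<otimes> b \<in> carrier G" using nu_ab K0_sub K1_sub by auto
  then show "x \<in> nu G psi ` carrier G" by blast
qed

lemma K0K1_subgroup: "subgroup (TS (K0 \<times> K1)) P"
  by (rule tm_set_subgroup)
     (use K0_sub K1_sub subgroup.m_closed[OF K0_subgroup] subgroup.m_closed[OF K1_subgroup]
      subgroup.m_inv_closed[OF K0_subgroup] subgroup.m_inv_closed[OF K1_subgroup]
      subgroup.one_closed[OF K0_subgroup] subgroup.one_closed[OF K1_subgroup] in auto)

lemma K0_TS_subgroup: "subgroup (TS (K0 \<times> {\<one>})) P"
  by (rule tm_set_subgroup)
     (use K0_sub subgroup.m_closed[OF K0_subgroup] subgroup.m_inv_closed[OF K0_subgroup]
      subgroup.one_closed[OF K0_subgroup] in auto)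

lemma K1_TS_subgroup: "subgroup (TS ({\<one>} \<times> K1)) P"
  by (rule tm_set_subgroup)
     (use K1_sub subgroup.m_closed[OF K1_subgroup] subgroup.m_inv_closed[OF K1_subgroup]
      subgroup.one_closed[OF K1_subgroup] in auto)

lemma N0_normal: "nu G psi ` K0 \<lhd> P\<lparr>carrier := nu G psi ` carrier G\<rparr>"
proof (rule normal_in_sub[OF group_BijGroup N_subgroup])
  show "subgroup (nu G psi ` K0) P" using K0_TS_subgroup N0_TS by simp
  show "nu G psi ` K0 \<subseteq> nu G psi ` carrier G" using K0_sub by auto
  fix x h assume x: "x \<in> nu G psi ` carrier G" and h: "h \<in> nu G psi ` K0"
  obtain g where g: "g \<in> carrier G" "x = tm G (g \<otimes> inv (psi g)) (psi g)" using x nu_tm by auto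
  obtain a where a: "a \<in> K0" "h = tm G a \<one>" using h N0_TS TS_prod1 by auto
  have ac: "a \<in> carrier G" using a K0_sub by auto
  have "x \<otimes>\<^bsub>P\<^esub> h \<otimes>\<^bsub>P\<^esub> inv\<^bsub>P\<^esub> x = tm G ((g \<otimes> inv (psi g)) \<otimes> a \<otimes> inv (g \<otimes> inv (psi g))) \<one>"
    using g a ac by (simp add: tm_conj)
  moreover have "(g \<otimes> inv (psi g)) \<otimes> a \<otimes> inv (g \<otimes> inv (psi g)) \<in> K0" using K0_conj g a by simp
  ultimately show "x \<otimes>\<^bsub>P\<^esub> h \<otimes>\<^bsub>P\<^esub> inv\<^bsub>P\<^esub> x \<in> nu G psi ` K0" using N0_TS TS_prod1 by auto
qed

lemma idp: "internal_direct_product P (TS (K0 \<times> K1)) (nu G psi ` K0) (nu G psi ` K1)"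
  unfolding internal_direct_product_def
proof (intro conjI)
  show "subgroup (TS (K0 \<times> K1)) P" by (rule K0K1_subgroup)
  show "nu G psi ` K0 <#>\<^bsub>P\<^esub> nu G psi ` K1 = TS (K0 \<times> K1)" by (rule N01_TS)
  show "nu G psi ` K0 \<lhd> P\<lparr>carrier := TS (K0 \<times> K1)\<rparr>"
  proof (rule normal_in_sub[OF group_BijGroup K0K1_subgroup])
    show "subgroup (nu G psi ` K0) P" using K0_TS_subgroup N0_TS by simp
    show "nu G psi ` K0 \<subseteq> TS (K0 \<times> K1)" unfolding N0_TS
      using subgroup.one_closed[OF K1_subgroup] by auto
    fix x h assume x: "x \<in> TS (K0 \<times> K1)" and h: "h \<in> nu G psi ` K0"
    obtain a b where ab: "a \<in> K0" "b \<in> K1" "x = tm G a b" using x by (rule TS_prod_memE)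
    obtain a' where a: "a' \<in> K0" "h = tm G a' \<one>" using h N0_TS TS_prod1 by auto
    have c: "a \<in> carrier G" "b \<in> carrier G" "a' \<in> carrier G" using a ab K0_sub K1_sub by auto
    have "x \<otimes>\<^bsub>P\<^esub> h \<otimes>\<^bsub>P\<^esub> inv\<^bsub>P\<^esub> x = tm G (a \<otimes> a' \<otimes> inv a) \<one>"
      using c ab a by (simp add: tm_conj)
    moreover have "a \<otimes> a' \<otimes> inv a \<in> K0" using K0_conj c a by simp
    ultimately show "x \<otimes>\<^bsub>P\<^esub> h \<otimes>\<^bsub>P\<^esub> inv\<^bsub>P\<^esub> x \<in> nu G psi ` K0" using N0_TS TS_prod1 by auto
  qed
  show "nu G psi ` K1 \<lhd> P\<lparr>carrier := TS (K0 \<times> K1)\<rparr>"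
  proof (rule normal_in_sub[OF group_BijGroup K0K1_subgroup])
    show "subgroup (nu G psi ` K1) P" using K1_TS_subgroup N1_TS by simp
    show "nu G psi ` K1 \<subseteq> TS (K0 \<times> K1)" unfolding N1_TS
      using subgroup.one_closed[OF K0_subgroup] by auto
    fix x h assume x: "x \<in> TS (K0 \<times> K1)" and h: "h \<in> nu G psi ` K1"
    obtain a b where ab: "a \<in> K0" "b \<in> K1" "x = tm G a b" using x by (rule TS_prod_memE)
    obtain b' where b: "b' \<in> K1" "h = tm G \<one> b'" using h N1_TS TS_prod2 by auto
    have c: "a \<in> carrier G" "b \<in> carrier G" "b' \<in> carrier G" using b ab K0_sub K1_sub by auto
    have "x \<otimes>\<^bsub>P\<^esub> h \<otimes>\<^bsub>P\<^esub> inv\<^bsub>P\<^esub> x = tm G \<one> (inv b \<otimes> b' \<otimes> b)"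
      using c ab b by (simp add: tm_conj)
    moreover have "inv b \<otimes> b' \<otimes> b \<in> K1"
      using b ab subgroup.m_closed[OF K1_subgroup] subgroup.m_inv_closed[OF K1_subgroup] by simp
    ultimately show "x \<otimes>\<^bsub>P\<^esub> h \<otimes>\<^bsub>P\<^esub> inv\<^bsub>P\<^esub> x \<in> nu G psi ` K1" using N1_TS TS_prod2 by auto
  qed
  show "nu G psi ` K0 \<inter> nu G psi ` K1 = {\<one>\<^bsub>P\<^esub>}"
  proof
    show "{\<one>\<^bsub>P\<^esub>} \<subseteq> nu G psi ` K0 \<inter> nu G psi ` K1"
      using subgroup.one_closed[OF K0_subgroup] subgroup.one_closed[OF K1_subgroup] nu_one by force
    show "nu G psi ` K0 \<inter> nu G psi ` K1 \<subseteq> {\<one>\<^bsub>P\<^esub>}"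
    proof
      fix x assume "x \<in> nu G psi ` K0 \<inter> nu G psi ` K1"
      then obtain a b where ab: "a \<in> K0" "b \<in> K1" "x = tm G a \<one>" "x = tm G \<one> b"
        unfolding N0_TS N1_TS TS_prod1 TS_prod2 by auto
      have c: "a \<in> carrier G" "b \<in> carrier G" using ab K0_sub K1_sub by auto
      have "a \<otimes> \<one> = \<one> \<otimes> b" using tm_eqD(1)[of a \<one> \<one> b] ab c by simp
      then have "a = b" using c by simp
      then have "a = \<one>" using K01 ab by simp
      then show "x \<in> {\<one>\<^bsub>P\<^esub>}" using ab tm_one by simp
    qed
  qed
qed

end



context nuctx begin

lemma K0_carr: "a \<in> K0 \<Longrightarrow> a \<in> carrier G" using K0_sub by auto
lemma K1_carr: "a \<in> K1 \<Longrightarrow> a \<in> carrier G" using K1_sub by auto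

lemma iso0: "P\<lparr>carrier := nu G psi ` K0\<rparr> \<cong> G\<lparr>carrier := K0\<rparr>"
proof (rule iso_from[OF subgroup_imp_group[OF K0_subgroup]])
  show "(\<lambda>a. tm G a \<one>) \<in> hom (G\<lparr>carrier := K0\<rparr>) (P\<lparr>carrier := nu G psi ` K0\<rparr>)"
    unfolding hom_def N0_TS TS_prod1 by (auto simp: tm_mult K0_carr)
  show "inj_on (\<lambda>a. tm G a \<one>) (carrier (G\<lparr>carrier := K0\<rparr>))"
  proof (rule inj_onI)
    fix a a' assume "a \<in> carrier (G\<lparr>carrier := K0\<rparr>)" "a' \<in> carrier (G\<lparr>carrier := K0\<rparr>)"
      and e: "tm G a \<one> = tm G a' \<one>"
    then have c: "a \<in> carrier G" "a' \<in> carrier G" using K0_sub by auto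
    show "a = a'" using tm_eqD(1)[OF c(1) one_closed c(2) one_closed e] c by simp
  qed
  show "(\<lambda>a. tm G a \<one>) ` carrier (G\<lparr>carrier := K0\<rparr>) = nu G psi ` K0"
    using N0_TS TS_prod1 by simp
qed

lemma iso1: "P\<lparr>carrier := nu G psi ` K1\<rparr> \<cong> G\<lparr>carrier := K1\<rparr>"
proof (rule iso_from[OF subgroup_imp_group[OF K1_subgroup]])
  show "rreg G \<in> hom (G\<lparr>carrier := K1\<rparr>) (P\<lparr>carrier := nu G psi ` K1\<rparr>)"
    unfolding hom_def N1_eq by (auto simp: rreg_tm tm_mult inv_mult_group K1_carr)
  show "inj_on (rreg G) (carrier (G\<lparr>carrier := K1\<rparr>))"
  proof (rule inj_onI)
    fix a a' assume "a \<in> carrier (G\<lparr>carrier := K1\<rparr>)" "a' \<in> carrier (G\<lparr>carrier := K1\<rparr>)"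
      and e: "rreg G a = rreg G a'"
    then have c: "a \<in> carrier G" "a' \<in> carrier G" using K1_sub by auto
    have "\<one> \<otimes> inv a = \<one> \<otimes> inv a'"
      using tm_eqD(1)[of \<one> "inv a" \<one> "inv a'"] e c by (simp add: rreg_tm)
    then have "inv a = inv a'" using c by simp
    then show "a = a'" using c by (metis inv_inv)
  qed
  show "rreg G ` carrier (G\<lparr>carrier := K1\<rparr>) = nu G psi ` K1"
    using N1_eq by simp
qed

lemma iso01: "P\<lparr>carrier := TS (K0 \<times> K1)\<rparr> \<cong> G\<lparr>carrier := K0\<rparr> \<times>\<times> G\<lparr>carrier := K1\<rparr>"
proof (rule iso_from[OF DirProd_group[OF subgroup_imp_group[OF K0_subgroup] subgroup_imp_group[OF K1_subgroup]]])
  let ?f = "\<lambda>p. tm G (fst p) (inv (snd p))"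
  have img: "?f ` (K0 \<times> K1) = TS (K0 \<times> K1)"
  proof
    show "?f ` (K0 \<times> K1) \<subseteq> TS (K0 \<times> K1)"
    proof
      fix x assume "x \<in> ?f ` (K0 \<times> K1)"
      then obtain a b where ab: "a \<in> K0" "b \<in> K1" "x = tm G a (inv b)" by auto
      have "inv b \<in> K1" using ab subgroup.m_inv_closed[OF K1_subgroup] by simp
      then show "x \<in> TS (K0 \<times> K1)" using ab TS_memI[of a "inv b" "K0 \<times> K1"] by simp
    qed
    show "TS (K0 \<times> K1) \<subseteq> ?f ` (K0 \<times> K1)"
    proof
      fix x assume "x \<in> TS (K0 \<times> K1)"
      then obtain a b where ab: "a \<in> K0" "b \<in> K1" "x = tm G a b" by (rule TS_prod_memE)
      have ib: "inv b \<in> K1" using ab subgroup.m_inv_closed[OF K1_subgroup] by simp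
      have "x = ?f (a, inv b)" using ab K1_sub by auto
      then show "x \<in> ?f ` (K0 \<times> K1)" using ab ib by blast
    qed
  qed
  show "?f \<in> hom (G\<lparr>carrier := K0\<rparr> \<times>\<times> G\<lparr>carrier := K1\<rparr>) (P\<lparr>carrier := TS (K0 \<times> K1)\<rparr>)"
    unfolding hom_def
  proof (intro CollectI conjI ballI)
    show "?f \<in> carrier (G\<lparr>carrier := K0\<rparr> \<times>\<times> G\<lparr>carrier := K1\<rparr>) \<rightarrow> carrier (P\<lparr>carrier := TS (K0 \<times> K1)\<rparr>)"
    proof (rule Pi_I)
      fix p assume "p \<in> carrier (G\<lparr>carrier := K0\<rparr> \<times>\<times> G\<lparr>carrier := K1\<rparr>)"
      then have "p \<in> K0 \<times> K1" by simp
      then have "?f p \<in> ?f ` (K0 \<times> K1)" by (rule imageI)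
      then show "?f p \<in> carrier (P\<lparr>carrier := TS (K0 \<times> K1)\<rparr>)" unfolding img by simp
    qed
    fix x y assume x: "x \<in> carrier (G\<lparr>carrier := K0\<rparr> \<times>\<times> G\<lparr>carrier := K1\<rparr>)"
      and y: "y \<in> carrier (G\<lparr>carrier := K0\<rparr> \<times>\<times> G\<lparr>carrier := K1\<rparr>)"
    obtain a b where xa: "x = (a,b)" "a \<in> K0" "b \<in> K1" using x by auto
    obtain a' b' where ya: "y = (a',b')" "a' \<in> K0" "b' \<in> K1" using y by auto
    have c: "a \<in> carrier G" "b \<in> carrier G" "a' \<in> carrier G" "b' \<in> carrier G"
      using xa ya K0_sub K1_sub by auto
    show "?f (x \<otimes>\<^bsub>G\<lparr>carrier := K0\<rparr> \<times>\<times> G\<lparr>carrier := K1\<rparr>\<^esub> y) = ?f x \<otimes>\<^bsub>P\<lparr>carrier := TS (K0 \<times> K1)\<rparr>\<^esub> ?f y"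
    proof -
      have m: "x \<otimes>\<^bsub>G\<lparr>carrier := K0\<rparr> \<times>\<times> G\<lparr>carrier := K1\<rparr>\<^esub> y = (a \<otimes> a', b \<otimes> b')"
        using xa ya by simp
      have "?f (a \<otimes> a', b \<otimes> b') = tm G (a \<otimes> a') (inv b' \<otimes> inv b)"
        using c by (simp add: inv_mult_group)
      also have "\<dots> = tm G a (inv b) \<otimes>\<^bsub>P\<^esub> tm G a' (inv b')"
        using c by (simp add: tm_mult)
      finally show ?thesis using m xa ya by simp
    qed
  qed
  show "inj_on ?f (carrier (G\<lparr>carrier := K0\<rparr> \<times>\<times> G\<lparr>carrier := K1\<rparr>))"
  proof (rule inj_onI)
    fix x y assume x: "x \<in> carrier (G\<lparr>carrier := K0\<rparr> \<times>\<times> G\<lparr>carrier := K1\<rparr>)"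
      and y: "y \<in> carrier (G\<lparr>carrier := K0\<rparr> \<times>\<times> G\<lparr>carrier := K1\<rparr>)" and e: "?f x = ?f y"
    obtain a b where xa: "x = (a,b)" "a \<in> K0" "b \<in> K1" using x by auto
    obtain a' b' where ya: "y = (a',b')" "a' \<in> K0" "b' \<in> K1" using y by auto
    have c: "a \<in> carrier G" "b \<in> carrier G" "a' \<in> carrier G" "b' \<in> carrier G"
      using xa ya K0_sub K1_sub by auto
    have e1: "a \<otimes> inv b = a' \<otimes> inv b'"
      using tm_eqD(1)[of a "inv b" a' "inv b'"] e c xa ya by simp
    have w: "inv a' \<otimes> a = inv b' \<otimes> b"
    proof -
      have "inv a' \<otimes> a = inv a' \<otimes> (a \<otimes> inv b) \<otimes> b" using c by (simp add: m_assoc)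
      also have "\<dots> = inv a' \<otimes> (a' \<otimes> inv b') \<otimes> b" using e1 by simp
      also have "\<dots> = inv b' \<otimes> b" using c by (simp add: m_assoc)
      finally show ?thesis .
    qed
    have w0: "inv a' \<otimes> a \<in> K0"
      using xa ya subgroup.m_closed[OF K0_subgroup] subgroup.m_inv_closed[OF K0_subgroup] by simp
    have w1: "inv a' \<otimes> a \<in> K1" unfolding w
      using xa ya subgroup.m_closed[OF K1_subgroup] subgroup.m_inv_closed[OF K1_subgroup] by simp
    have "inv a' \<otimes> a = \<one>" using K01[OF w0 w1] .
    then have "a' = a" by (rule inv_one_eq[rotated 2]) (use c in auto)
    moreover have "inv b' \<otimes> b = \<one>" using K01[OF w0 w1] w by simp
    then have "b' = b" by (rule inv_one_eq[rotated 2]) (use c in auto)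
    ultimately show "x = y" using xa ya by simp
  qed
  show "?f ` carrier (G\<lparr>carrier := K0\<rparr> \<times>\<times> G\<lparr>carrier := K1\<rparr>) = TS (K0 \<times> K1)"
    using img by simp
qed

end



context nuctx begin

lemma LN: "lreg G ` carrier G \<inter> nu G psi ` carrier G = {lreg G g | g. g \<in> carrier G \<and> psi g \<in> group_center G}"
proof
  show "lreg G ` carrier G \<inter> nu G psi ` carrier G \<subseteq> {lreg G g | g. g \<in> carrier G \<and> psi g \<in> group_center G}"
  proof
    fix x assume x: "x \<in> lreg G ` carrier G \<inter> nu G psi ` carrier G"
    obtain k where k: "k \<in> carrier G" "x = lreg G k" using x by blast
    obtain g where g: "g \<in> carrier G" "x = nu G psi g" using x by blast
    have e: "tm G k \<one> = tm G (g \<otimes> inv (psi g)) (psi g)" using k g by (simp add: lreg_tm nu_tm)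
    have "k \<otimes> \<one> = g \<otimes> inv (psi g) \<otimes> psi g" using tm_eqD(1)[OF _ _ _ _ e] k g by simp
    then have kg: "k = g" using k g by (simp add: m_assoc)
    have "inv (g \<otimes> inv (psi g)) \<otimes> k \<in> group_center G" using tm_eqD(2)[OF _ _ _ _ e] k g by simp
    moreover have "inv (g \<otimes> inv (psi g)) \<otimes> k = psi g" using kg g by (simp add: inv_mult_group m_assoc)
    ultimately show "x \<in> {lreg G g | g. g \<in> carrier G \<and> psi g \<in> group_center G}" using k kg by auto
  qed
  show "{lreg G g | g. g \<in> carrier G \<and> psi g \<in> group_center G} \<subseteq> lreg G ` carrier G \<inter> nu G psi ` carrier G"
  proof
    fix x assume "x \<in> {lreg G g | g. g \<in> carrier G \<and> psi g \<in> group_center G}"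
    then obtain g where g: "g \<in> carrier G" "psi g \<in> group_center G" "x = lreg G g" by blast
    have "nu G psi g = tm G (g \<otimes> inv (psi g)) (psi g \<otimes> \<one>)" using g by (simp add: nu_tm)
    also have "\<dots> = tm G (g \<otimes> inv (psi g) \<otimes> psi g) \<one>" using tm_eqI[OF _ one_closed g(2)] g by simp
    also have "\<dots> = lreg G g" using g by (simp add: lreg_tm m_assoc)
    finally show "x \<in> lreg G ` carrier G \<inter> nu G psi ` carrier G" using g by force
  qed
qed

lemma LN_TS: "{lreg G g | g. g \<in> carrier G \<and> psi g \<in> group_center G} = TS (L \<times> {\<one>})"
  unfolding TS_prod1 L_def by (auto simp: lreg_tm intro!: exI)

lemma RN: "rreg G ` carrier G \<inter> nu G psi ` carrier G = {rreg G g | g. g \<in> carrier G \<and> g \<otimes> inv (psi g) \<in> group_center G}"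
proof
  show "rreg G ` carrier G \<inter> nu G psi ` carrier G \<subseteq> {rreg G g | g. g \<in> carrier G \<and> g \<otimes> inv (psi g) \<in> group_center G}"
  proof
    fix x assume x: "x \<in> rreg G ` carrier G \<inter> nu G psi ` carrier G"
    obtain k where k: "k \<in> carrier G" "x = rreg G k" using x by blast
    obtain g where g: "g \<in> carrier G" "x = nu G psi g" using x by blast
    have e: "tm G \<one> (inv k) = tm G (g \<otimes> inv (psi g)) (psi g)" using k g by (simp add: rreg_tm nu_tm)
    have "\<one> \<otimes> inv k = g \<otimes> inv (psi g) \<otimes> psi g" using tm_eqD(1)[OF _ _ _ _ e] k g by simp
    then have kg: "inv k = g" using k g by (simp add: m_assoc)
    then have kg': "k = inv g" using k by (metis inv_inv)
    have "inv (g \<otimes> inv (psi g)) \<otimes> \<one> \<in> group_center G" using tm_eqD(2)[OF _ _ _ _ e] k g by simp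
    then have "inv (g \<otimes> inv (psi g)) \<in> group_center G" using g by simp
    from center_inv[OF this] have "g \<otimes> inv (psi g) \<in> group_center G" using g by simp
    then have "g \<in> S" using g by (simp add: S_def)
    then have "inv g \<in> S" by (rule S_inv)
    then show "x \<in> {rreg G g | g. g \<in> carrier G \<and> g \<otimes> inv (psi g) \<in> group_center G}"
      using k kg' by (auto simp: S_def)
  qed
  show "{rreg G g | g. g \<in> carrier G \<and> g \<otimes> inv (psi g) \<in> group_center G} \<subseteq> rreg G ` carrier G \<inter> nu G psi ` carrier G"
  proof
    fix x assume "x \<in> {rreg G g | g. g \<in> carrier G \<and> g \<otimes> inv (psi g) \<in> group_center G}"
    then obtain g where g: "g \<in> carrier G" "g \<otimes> inv (psi g) \<in> group_center G" "x = rreg G g" by blast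
    have "inv g \<in> S" using g S_inv by (simp add: S_def)
    then have wZ: "inv g \<otimes> psi g \<in> group_center G" using g by (simp add: S_def)
    define w where "w = inv g \<otimes> psi g"
    have wc: "w \<in> carrier G" using g by (simp add: w_def)
    have iwZ: "inv w \<in> group_center G" using center_inv wZ by (simp add: w_def)
    have "rreg G g = tm G (w \<otimes> inv w) (inv g)" using g wc by (simp add: rreg_tm)
    also have "\<dots> = tm G w (inv w \<otimes> inv g)" using tm_eqI[OF wc _ iwZ] g by simp
    also have "inv w \<otimes> inv g = inv (psi g)" using g by (simp add: w_def inv_mult_group m_assoc)
    also have "tm G w (inv (psi g)) = nu G psi (inv g)" using g by (simp add: nu_tm w_def)
    finally show "x \<in> rreg G ` carrier G \<inter> nu G psi ` carrier G" using g by force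
  qed
qed

lemma RN_TS: "{rreg G g | g. g \<in> carrier G \<and> g \<otimes> inv (psi g) \<in> group_center G} = TS ({\<one>} \<times> S)"
  unfolding TS_prod2
proof
  show "{rreg G g | g. g \<in> carrier G \<and> g \<otimes> inv (psi g) \<in> group_center G} \<subseteq> tm G \<one> ` S"
  proof
    fix x assume "x \<in> {rreg G g | g. g \<in> carrier G \<and> g \<otimes> inv (psi g) \<in> group_center G}"
    then obtain g where g: "g \<in> S" "x = rreg G g" by (auto simp: S_def)
    have "inv g \<in> S" using S_inv g by simp
    moreover have "x = tm G \<one> (inv g)" using g by (simp add: rreg_tm)
    ultimately show "x \<in> tm G \<one> ` S" by blast
  qed
  show "tm G \<one> ` S \<subseteq> {rreg G g | g. g \<in> carrier G \<and> g \<otimes> inv (psi g) \<in> group_center G}"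
  proof
    fix x assume "x \<in> tm G \<one> ` S"
    then obtain d where d: "d \<in> S" "x = tm G \<one> d" by blast
    have i: "inv d \<in> S" using S_inv d by simp
    have "x = rreg G (inv d)" using d S_sub by (auto simp: rreg_tm)
    then show "x \<in> {rreg G g | g. g \<in> carrier G \<and> g \<otimes> inv (psi g) \<in> group_center G}"
      using i by (auto simp: S_def)
  qed
qed

lemma L_TS_subgroup: "subgroup (TS (L \<times> {\<one>})) P"
  by (rule tm_set_subgroup)
     (use L_sub subgroup.m_closed[OF L_subgroup] subgroup.m_inv_closed[OF L_subgroup]
      subgroup.one_closed[OF L_subgroup] in auto)

lemma S_TS_subgroup: "subgroup (TS ({\<one>} \<times> S)) P"
  by (rule tm_set_subgroup) (use S_sub S_mult S_inv S_one in auto)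

lemma L_norm: "normalises P (lreg G ` carrier G) (TS (L \<times> {\<one>}))"
  by (rule tm_set_normalises) (use L_sub L_conj in auto)
lemma S_norm: "normalises P (lreg G ` carrier G) (TS ({\<one>} \<times> S))"
  by (rule tm_set_normalises) (use S_sub in auto)
lemma S_cent: "centralises P (lreg G ` carrier G) (TS ({\<one>} \<times> S))"
  by (rule tm_set_centralises) (use S_sub in auto)
lemma K0_norm: "normalises P (lreg G ` carrier G) (TS (K0 \<times> {\<one>}))"
  by (rule tm_set_normalises) (use K0_sub K0_conj in auto)
lemma K01_norm: "normalises P (lreg G ` carrier G) (TS (K0 \<times> K1))"
  by (rule tm_set_normalises) (use K0_sub K1_sub K0_conj in auto)
lemma K1_cent: "centralises P (lreg G ` carrier G) (TS ({\<one>} \<times> K1))"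
  by (rule tm_set_centralises) (use K1_sub in auto)

end

theorem mainTheorem9:
  fixes G :: "('a, 'b) monoid_scheme" (structure)
    and \<psi> :: "'a \<Rightarrow> 'a"
    and N N0 N1 N01 G0 G1 :: "_ set"
  assumes grp: "group G"
    and fin: "finite (carrier G)"
    and endo: "\<psi> \<in> hom G G"
    and hyp: "\<psi> ` comm_subgroup G (psi_comm_subgroup G \<psi>) (carrier G) \<subseteq> group_center G"
    and N_def: "N = nu G \<psi> ` carrier G"
    and G0_def: "G0 = {g \<in> carrier G. \<psi> g = \<one>}"
    and G1_def: "G1 = {g \<in> carrier G. \<psi> g = g}"
    and N0_def: "N0 = nu G \<psi> ` G0"
    and N1_def: "N1 = nu G \<psi> ` G1"
    and N01_def: "N01 = N0 <#>\<^bsub>Perm G\<^esub> N1"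
  shows
    \<comment> \<open>(1)\<close>
    "(N0 = lreg G ` G0 \<and> subgroup N (Perm G) \<and> N0 \<lhd> (Perm G)\<lparr>carrier := N\<rparr>
      \<and> (Perm G)\<lparr>carrier := N0\<rparr> \<cong> G\<lparr>carrier := G0\<rparr>
      \<and> normalises (Perm G) (lreg G ` carrier G) N0)
     \<comment> \<open>(2)\<close>
     \<and> (N1 = rreg G ` G1 \<and> subgroup N1 (Perm G) \<and> N1 \<subseteq> N
      \<and> (Perm G)\<lparr>carrier := N1\<rparr> \<cong> G\<lparr>carrier := G1\<rparr>
      \<and> centralises (Perm G) (lreg G ` carrier G) N1)
     \<comment> \<open>(3)\<close>
     \<and> (N01 = nu G \<psi> ` (G0 <#> G1) \<and> subgroup N01 (Perm G) \<and> N01 \<subseteq> N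
      \<and> internal_direct_product (Perm G) N01 N0 N1
      \<and> (Perm G)\<lparr>carrier := N01\<rparr> \<cong> G\<lparr>carrier := G0\<rparr> \<times>\<times> G\<lparr>carrier := G1\<rparr>
      \<and> normalises (Perm G) (lreg G ` carrier G) N01)
     \<comment> \<open>(4)\<close>
     \<and> (lreg G ` carrier G \<inter> N = {lreg G g | g. g \<in> carrier G \<and> \<psi> g \<in> group_center G}
      \<and> rreg G ` carrier G \<inter> N
          = {rreg G g | g. g \<in> carrier G \<and> g \<otimes> inv (\<psi> g) \<in> group_center G}
      \<and> subgroup (lreg G ` carrier G \<inter> N) (Perm G) \<and> lreg G ` carrier G \<inter> N \<subseteq> N
      \<and> subgroup (rreg G ` carrier G \<inter> N) (Perm G) \<and> rreg G ` carrier G \<inter> N \<subseteq> N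
      \<and> normalises (Perm G) (lreg G ` carrier G) (lreg G ` carrier G \<inter> N)
      \<and> normalises (Perm G) (lreg G ` carrier G) (rreg G ` carrier G \<inter> N)
      \<and> centralises (Perm G) (lreg G ` carrier G) (rreg G ` carrier G \<inter> N))"
proof -
  interpret nuctx G \<psi>
    by (rule nuctx.intro[OF grp]) (rule nuctx_axioms.intro[OF endo hyp])
  have G0: "G0 = K0" using G0_def K0_def by simp
  have G1: "G1 = K1" using G1_def K1_def by simp
  have N0: "N0 = nu G \<psi> ` K0" using N0_def G0 by simp
  have N1: "N1 = nu G \<psi> ` K1" using N1_def G1 by simp
  have N01: "N01 = TS (K0 \<times> K1)" using N01_def N0 N1 N01_TS by simp
  have Nsg: "subgroup N (Perm G)" using N_subgroup N_def by simp
  show ?thesis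
    unfolding G0 G1 N0 N1 N01 N_def
  proof (intro conjI)
    show "nu G \<psi> ` K0 = lreg G ` K0" by (rule N0_eq)
    show "subgroup (nu G \<psi> ` carrier G) (Perm G)" by (rule N_subgroup)
    show "nu G \<psi> ` K0 \<lhd> Perm G\<lparr>carrier := nu G \<psi> ` carrier G\<rparr>" by (rule N0_normal)
    show "Perm G\<lparr>carrier := nu G \<psi> ` K0\<rparr> \<cong> G\<lparr>carrier := K0\<rparr>" by (rule iso0)
    show "normalises (Perm G) (lreg G ` carrier G) (nu G \<psi> ` K0)" using K0_norm N0_TS by simp
    show "nu G \<psi> ` K1 = rreg G ` K1" by (rule N1_eq)
    show "subgroup (nu G \<psi> ` K1) (Perm G)" using K1_TS_subgroup N1_TS by simp
    show "nu G \<psi> ` K1 \<subseteq> nu G \<psi> ` carrier G" using K1_sub by auto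
    show "Perm G\<lparr>carrier := nu G \<psi> ` K1\<rparr> \<cong> G\<lparr>carrier := K1\<rparr>" by (rule iso1)
    show "centralises (Perm G) (lreg G ` carrier G) (nu G \<psi> ` K1)" using K1_cent N1_TS by simp
    show "TS (K0 \<times> K1) = nu G \<psi> ` (K0 <#> K1)" using N01_nu by simp
    show "subgroup (TS (K0 \<times> K1)) (Perm G)" by (rule K0K1_subgroup)
    show "TS (K0 \<times> K1) \<subseteq> nu G \<psi> ` carrier G" by (rule N01_sub)
    show "internal_direct_product (Perm G) (TS (K0 \<times> K1)) (nu G \<psi> ` K0) (nu G \<psi> ` K1)" by (rule idp)
    show "Perm G\<lparr>carrier := TS (K0 \<times> K1)\<rparr> \<cong> G\<lparr>carrier := K0\<rparr> \<times>\<times> G\<lparr>carrier := K1\<rparr>" by (rule iso01)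
    show "normalises (Perm G) (lreg G ` carrier G) (TS (K0 \<times> K1))" by (rule K01_norm)
    show "lreg G ` carrier G \<inter> nu G \<psi> ` carrier G = {lreg G g |g. g \<in> carrier G \<and> \<psi> g \<in> group_center G}" by (rule LN)
    show "rreg G ` carrier G \<inter> nu G \<psi> ` carrier G = {rreg G g |g. g \<in> carrier G \<and> g \<otimes> inv \<psi> g \<in> group_center G}" by (rule RN)
    show "subgroup (lreg G ` carrier G \<inter> nu G \<psi> ` carrier G) (Perm G)" using L_TS_subgroup LN LN_TS by simp
    show "lreg G ` carrier G \<inter> nu G \<psi> ` carrier G \<subseteq> nu G \<psi> ` carrier G" by blast
    show "subgroup (rreg G ` carrier G \<inter> nu G \<psi> ` carrier G) (Perm G)" using S_TS_subgroup RN RN_TS by simp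
    show "rreg G ` carrier G \<inter> nu G \<psi> ` carrier G \<subseteq> nu G \<psi> ` carrier G" by blast
    show "normalises (Perm G) (lreg G ` carrier G) (lreg G ` carrier G \<inter> nu G \<psi> ` carrier G)" using L_norm LN LN_TS by simp
    show "normalises (Perm G) (lreg G ` carrier G) (rreg G ` carrier G \<inter> nu G \<psi> ` carrier G)" using S_norm RN RN_TS by simp
    show "centralises (Perm G) (lreg G ` carrier G) (rreg G ` carrier G \<inter> nu G \<psi> ` carrier G)" using S_cent RN RN_TS by simp
  qed
qed

end
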